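(* Let $f_1,\dots,f_k\in\mathcal{C}_n$ and $\varphi\in\mathcal{C}_k$. Then the function $f:\Gamma_+^{(n)}\to\mathbb{R}$ defined by $f(x_1,\dots,x_n)=\varphi\big(f_1(x_1,\dots,x_n),\dots,f_k(x_1,\dots,x_n)\big)$ belongs to $\mathcal{C}_n$. If moreover $f_1,\dots,f_k\in\mathcal{S}_n$, then $f\in\mathcal{S}_n$.
   Context: For $m\ge1$, $\Gamma_+^{(m)}=\{x\in\mathbb{R}^m: x_i>0\ \forall i\}$. $\mathcal{C}_m$ is the class of functions $g:\Gamma_+^{(m)}\to\mathbb{R}$ which are $C^\infty$, homogeneous of degree one ($g(cx)=cg(x)$ for $c>0$), strictly monotone increasing ($\partial g/\partial x_i>0$ for each $i$), concave, and inverse-concave, meaning $g^*(x_1,\dots,x_m)=-g(x_1^{-1},\dots,x_m^{-1})$ is concave on $\Gamma_+^{(m)}$. $\mathcal{S}_m$ is the subclass of symmetric functions (invariant under permutations of the arguments) in $\mathcal{C}_m$. (Functions in $\mathcal{C}_m$ take positive values, so the composition is defined.) *)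

theory Defs
  imports "HOL-Analysis.Analysis"
begin

definition pos_orthant :: "(real ^ 'n) set" where
  "pos_orthant = {x. \<forall>i. x $ i > 0}"

definition partial_deriv :: "(real ^ 'n \<Rightarrow> real) \<Rightarrow> 'n \<Rightarrow> real ^ 'n \<Rightarrow> real" where
  "partial_deriv g i x = frechet_derivative g (at x) (axis i 1)"

fun ck_on :: "nat \<Rightarrow> (real ^ 'n) set \<Rightarrow> (real ^ 'n \<Rightarrow> real) \<Rightarrow> bool" where
  "ck_on 0 S g = continuous_on S g"
| "ck_on (Suc m) S g =
     ((\<forall>x\<in>S. g differentiable (at x)) \<and> (\<forall>i. ck_on m S (partial_deriv g i)))"

definition smooth_on :: "(real ^ 'n) set \<Rightarrow> (real ^ 'n \<Rightarrow> real) \<Rightarrow> bool" where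
  "smooth_on S g \<longleftrightarrow> (\<forall>m. ck_on m S g)"

text \<open>The class C_m (here m = CARD('n)).\<close>
definition class_C :: "(real ^ 'n \<Rightarrow> real) \<Rightarrow> bool" where
  "class_C g \<longleftrightarrow>
     smooth_on pos_orthant g
   \<and> (\<forall>c>0. \<forall>x\<in>pos_orthant. g (c *\<^sub>R x) = c * g x)
   \<and> (\<forall>x\<in>pos_orthant. \<forall>i. partial_deriv g i x > 0)
   \<and> concave_on pos_orthant g
   \<and> concave_on pos_orthant (\<lambda>x. - g (\<chi> i. inverse (x $ i)))"

definition class_S :: "(real ^ 'n \<Rightarrow> real) \<Rightarrow> bool" where
  "class_S g \<longleftrightarrow> class_C g \<and>
     (\<forall>p x. p permutes (UNIV :: 'n set) \<longrightarrow> x \<in> pos_orthant \<longrightarrow> g (\<chi> i. x $ p i) = g x)"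

end

theory Submission
  imports Defs
begin


lemma open_pos_orthant: "open (pos_orthant :: (real^'n) set)"
proof -
  have "pos_orthant = (\<Inter>i\<in>UNIV. {x::real^'n. x $ i > 0})" by (auto simp: pos_orthant_def)
  moreover have "open (\<Inter>i\<in>UNIV. {x::real^'n. x $ i > 0})"
    by (auto intro!: open_INT open_Collect_less continuous_intros)
  ultimately show ?thesis by simp
qed

lemma convex_pos_orthant: "convex (pos_orthant :: (real^'n) set)"
  unfolding convex_def pos_orthant_def
proof (clarsimp)
  fix x y :: "real^'n" and u v :: real and i
  assume "\<forall>i. 0 < x $ i" "\<forall>i. 0 < y $ i" "0 \<le> u" "0 \<le> v" "u + v = 1"
  then show "0 < u * x $ i + v * y $ i"
    by (metis add.commute add_0 add_pos_nonneg add_nonneg_pos less_eq_real_def mult_eq_0_iff mult_nonneg_nonneg mult_pos_pos zero_less_one)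
qed

lemma vec_as_sum: "(\<chi> j. (g j :: real)) = (\<Sum>j\<in>UNIV. g j *\<^sub>R (axis j 1 :: real^'k))"
  by (simp add: vec_eq_iff axis_def if_distrib sum.If_cases cong del: if_weak_cong)

lemma has_derivative_chi:
  fixes fs :: "'k::finite \<Rightarrow> real^'n \<Rightarrow> real"
  assumes "\<And>j. (fs j has_derivative D j) (at x)"
  shows "((\<lambda>x. \<chi> j. fs j x) has_derivative (\<lambda>v. \<chi> j. D j v)) (at x)"
proof -
  have "((\<lambda>x. \<Sum>j\<in>UNIV. fs j x *\<^sub>R (axis j 1 :: real^'k)) has_derivative
        (\<lambda>v. \<Sum>j\<in>UNIV. D j v *\<^sub>R (axis j 1 :: real^'k))) (at x)"
    by (intro has_derivative_sum has_derivative_scaleR_left assms)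
  then show ?thesis by (simp only: vec_as_sum[symmetric])
qed

lemma linear_expand:
  fixes L :: "real^'k \<Rightarrow> real"
  assumes "linear L"
  shows "L v = (\<Sum>j\<in>UNIV. v $ j * L (axis j 1))"
proof -
  have "L v = L (\<Sum>j\<in>UNIV. (v $ j) *\<^sub>R (axis j 1 :: real^'k))"
    using vec_as_sum[of "\<lambda>j. v $ j"] by simp
  also have "\<dots> = (\<Sum>j\<in>UNIV. v $ j * L (axis j 1))"
    using assms by (simp add: linear_sum linear_scale)
  finally show ?thesis .
qed

lemma partial_deriv_local:
  assumes "open S" "x \<in> S" "\<And>y. y \<in> S \<Longrightarrow> g y = h y"
  shows "partial_deriv g i x = partial_deriv h i x"
proof -
  have "\<And>D. (g has_derivative D) (at x) \<longleftrightarrow> (h has_derivative D) (at x)"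
    using has_derivative_transform_within_open[OF _ assms(1,2)] assms(3) by metis
  then show ?thesis unfolding partial_deriv_def frechet_derivative_def by simp
qed

lemma chain_partial:
  fixes fs :: "'k::finite \<Rightarrow> real^'n \<Rightarrow> real" and \<psi> :: "real^'k \<Rightarrow> real"
  assumes "\<psi> differentiable (at (\<chi> j. fs j x))" "\<And>j. fs j differentiable (at x)"
  shows "(\<lambda>x. \<psi> (\<chi> j. fs j x)) differentiable (at x)"
    and "partial_deriv (\<lambda>x. \<psi> (\<chi> j. fs j x)) i x =
         (\<Sum>j\<in>UNIV. partial_deriv \<psi> j (\<chi> j. fs j x) * partial_deriv (fs j) i x)"
proof -
  let ?F = "\<lambda>x. \<chi> j. fs j x"
  let ?Dp = "frechet_derivative \<psi> (at (?F x))"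
  let ?Df = "\<lambda>j. frechet_derivative (fs j) (at x)"
  have dp: "(\<psi> has_derivative ?Dp) (at (?F x))" using assms(1) frechet_derivative_works by blast
  have df: "\<And>j. (fs j has_derivative ?Df j) (at x)" using assms(2) frechet_derivative_works by blast
  have dF: "(?F has_derivative (\<lambda>v. \<chi> j. ?Df j v)) (at x)" by (rule has_derivative_chi[OF df])
  have comp: "((\<lambda>x. \<psi> (?F x)) has_derivative (\<lambda>v. ?Dp (\<chi> j. ?Df j v))) (at x)"
    using diff_chain_at[OF dF dp] by (simp add: o_def)
  then show "(\<lambda>x. \<psi> (?F x)) differentiable (at x)" unfolding differentiable_def by blast
  have "partial_deriv (\<lambda>x. \<psi> (?F x)) i x = ?Dp (\<chi> j. ?Df j (axis i 1))"
    unfolding partial_deriv_def frechet_derivative_at[OF comp, symmetric] by simp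
  also have "\<dots> = (\<Sum>j\<in>UNIV. (\<chi> j. ?Df j (axis i 1)) $ j * ?Dp (axis j 1))"
    by (rule linear_expand[OF has_derivative_linear[OF dp]])
  also have "\<dots> = (\<Sum>j\<in>UNIV. ?Df j (axis i 1) * ?Dp (axis j 1))"
    by simp
  finally show "partial_deriv (\<lambda>x. \<psi> (?F x)) i x =
         (\<Sum>j\<in>UNIV. partial_deriv \<psi> j (?F x) * partial_deriv (fs j) i x)"
    unfolding partial_deriv_def by (simp add: mult.commute)
qed



lemma ck_on_cong:
  assumes "open S" "\<And>y. y \<in> S \<Longrightarrow> g y = h y"
  shows "ck_on m S g = ck_on m S h"
  using assms(2)
proof (induction m arbitrary: g h)
  case 0
  then show ?case using continuous_on_cong by auto
next
  case (Suc m)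
  have d: "\<And>x. x \<in> S \<Longrightarrow> g differentiable (at x) \<longleftrightarrow> h differentiable (at x)"
    unfolding differentiable_def
    using has_derivative_transform_within_open[OF _ assms(1)] Suc.prems by metis
  have p: "\<And>i. ck_on m S (partial_deriv g i) = ck_on m S (partial_deriv h i)"
    by (rule Suc.IH) (use partial_deriv_local[OF assms(1)] Suc.prems in metis)
  show ?case using d p by auto
qed

lemma ck_on_Suc_mono: "ck_on (Suc m) S g \<Longrightarrow> ck_on m S g"
proof (induction m arbitrary: g)
  case 0
  then show ?case
    by (auto intro!: continuous_at_imp_continuous_on differentiable_imp_continuous_within)
next
  case (Suc m)
  then show ?case by auto
qed

lemma ck_on_mono: "ck_on m S g \<Longrightarrow> k \<le> m \<Longrightarrow> ck_on k S g"
proof (induction m)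
  case 0 then show ?case by simp
next
  case (Suc m) then show ?case using ck_on_Suc_mono le_Suc_eq by blast
qed

lemma partial_add:
  assumes "f differentiable (at x)" "g differentiable (at x)"
  shows "partial_deriv (\<lambda>x. f x + g x) i x = partial_deriv f i x + partial_deriv g i x"
proof -
  have "((\<lambda>x. f x + g x) has_derivative (\<lambda>v. frechet_derivative f (at x) v + frechet_derivative g (at x) v)) (at x)"
    (is "(_ has_derivative ?D) _")
    using assms frechet_derivative_works has_derivative_add by blast
  note D = this
  show ?thesis unfolding partial_deriv_def frechet_derivative_at[OF D, symmetric] by simp
qed

lemma partial_mult:
  assumes "f differentiable (at x)" "g differentiable (at x)"
  shows "partial_deriv (\<lambda>x. f x * g x) i x = f x * partial_deriv g i x + partial_deriv f i x * g x"
proof -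
  have "((\<lambda>x. f x * g x) has_derivative (\<lambda>v. f x * frechet_derivative g (at x) v + frechet_derivative f (at x) v * g x)) (at x)"
    using assms frechet_derivative_works has_derivative_mult by blast
  note D = this
  show ?thesis unfolding partial_deriv_def frechet_derivative_at[OF D, symmetric] by simp
qed

lemma ck_on_const: 
  fixes S :: "(real^'n) set"
  shows "ck_on m S (\<lambda>x. c)"
proof (induction m arbitrary: c)
  case 0 then show ?case by simp
next
  case (Suc m)
  have pd: "partial_deriv (\<lambda>x. c) i = (\<lambda>x::real^'n. 0)" for i :: 'n by (rule ext) (simp add: partial_deriv_def)
  then show ?case using Suc.IH by (simp add: pd)
qed

lemma ck_on_add:
  assumes "open S"
  shows "ck_on m S f \<Longrightarrow> ck_on m S g \<Longrightarrow> ck_on m S (\<lambda>x. f x + g x)"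
proof (induction m arbitrary: f g)
  case 0 then show ?case by (auto intro: continuous_on_add)
next
  case (Suc m)
  have "ck_on m S (partial_deriv (\<lambda>x. f x + g x) i)" for i
  proof -
    have "ck_on m S (\<lambda>x. partial_deriv f i x + partial_deriv g i x)"
      using Suc by auto
    moreover have "ck_on m S (partial_deriv (\<lambda>x. f x + g x) i) = ck_on m S (\<lambda>x. partial_deriv f i x + partial_deriv g i x)"
      using Suc.prems by (intro ck_on_cong[OF assms]) (auto intro: partial_add)
    ultimately show ?thesis by simp
  qed
  then show ?case using Suc.prems by auto
qed

lemma ck_on_sum:
  assumes "open S" "finite A" "\<And>j. j \<in> A \<Longrightarrow> ck_on m S (f j)"
  shows "ck_on m S (\<lambda>x. \<Sum>j\<in>A. f j x)"
  using assms(2,3)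
proof (induction A rule: finite_induct)
  case empty then show ?case using ck_on_const[of m S 0] by simp
next
  case (insert a A)
  then show ?case using ck_on_add[OF assms(1), of m "f a" "\<lambda>x. \<Sum>j\<in>A. f j x"] by simp
qed

lemma ck_on_mult:
  assumes "open S"
  shows "ck_on m S f \<Longrightarrow> ck_on m S g \<Longrightarrow> ck_on m S (\<lambda>x. f x * g x)"
proof (induction m arbitrary: f g)
  case 0 then show ?case by (auto intro: continuous_on_mult)
next
  case (Suc m)
  have fm: "ck_on m S f" "ck_on m S g" using Suc.prems ck_on_Suc_mono by blast+
  have "ck_on m S (partial_deriv (\<lambda>x. f x * g x) i)" for i
  proof -
    have "ck_on m S (\<lambda>x. f x * partial_deriv g i x + partial_deriv f i x * g x)"
      using Suc fm by (intro ck_on_add[OF assms]) auto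
    moreover have "ck_on m S (partial_deriv (\<lambda>x. f x * g x) i) = ck_on m S (\<lambda>x. f x * partial_deriv g i x + partial_deriv f i x * g x)"
      using Suc.prems by (intro ck_on_cong[OF assms]) (auto intro: partial_mult)
    ultimately show ?thesis by simp
  qed
  then show ?case using Suc.prems by auto
qed

lemma ck_on_compose:
  fixes fs :: "'k::finite \<Rightarrow> real^'n \<Rightarrow> real" and \<psi> :: "real^'k \<Rightarrow> real"
  assumes "open S" "open U" "\<And>x. x \<in> S \<Longrightarrow> (\<chi> j. fs j x) \<in> U"
  shows "ck_on m U \<psi> \<Longrightarrow> (\<And>j. ck_on m S (fs j)) \<Longrightarrow> ck_on m S (\<lambda>x. \<psi> (\<chi> j. fs j x))"
proof (induction m arbitrary: \<psi>)
  case 0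
  have "continuous_on S (\<lambda>x. \<chi> j. fs j x)" using 0 by (auto intro: continuous_on_vec_lambda)
  then show ?case using 0 assms(3) by (auto intro: continuous_on_compose2)
next
  case (Suc m)
  have dpsi: "\<And>y. y \<in> U \<Longrightarrow> \<psi> differentiable (at y)" using Suc.prems by simp
  have dfs: "\<And>x j. x \<in> S \<Longrightarrow> fs j differentiable (at x)" using Suc.prems by simp
  have fm: "\<And>j. ck_on m S (fs j)" using Suc.prems ck_on_Suc_mono by blast
  have "ck_on m S (partial_deriv (\<lambda>x. \<psi> (\<chi> j. fs j x)) i)" for i
  proof -
    have "ck_on m S (\<lambda>x. \<Sum>j\<in>UNIV. partial_deriv \<psi> j (\<chi> j. fs j x) * partial_deriv (fs j) i x)"
    proof (intro ck_on_sum[OF assms(1)] finite_UNIV ck_on_mult[OF assms(1)])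
      fix j
      show "ck_on m S (\<lambda>x. partial_deriv \<psi> j (\<chi> j. fs j x))"
        using Suc.IH[of "partial_deriv \<psi> j"] Suc.prems fm by simp
      show "ck_on m S (partial_deriv (fs j) i)" using Suc.prems by simp
    qed simp
    moreover have "ck_on m S (partial_deriv (\<lambda>x. \<psi> (\<chi> j. fs j x)) i) =
       ck_on m S (\<lambda>x. \<Sum>j\<in>UNIV. partial_deriv \<psi> j (\<chi> j. fs j x) * partial_deriv (fs j) i x)"
      using dpsi dfs assms(3) by (intro ck_on_cong[OF assms(1)] chain_partial(2)) auto
    ultimately show ?thesis by simp
  qed
  moreover have "\<forall>x\<in>S. (\<lambda>x. \<psi> (\<chi> j. fs j x)) differentiable (at x)"
    using dpsi dfs assms(3) by (auto intro: chain_partial(1))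
  ultimately show ?case by simp
qed



lemma seg_deriv:
  fixes \<psi> :: "real^'k \<Rightarrow> real"
  assumes "\<psi> differentiable (at (y + t *\<^sub>R v))"
  shows "((\<lambda>s. \<psi> (y + s *\<^sub>R v)) has_real_derivative
          (\<Sum>j\<in>UNIV. v $ j * partial_deriv \<psi> j (y + t *\<^sub>R v))) (at t)"
proof -
  let ?Dp = "frechet_derivative \<psi> (at (y + t *\<^sub>R v))"
  have dp: "(\<psi> has_derivative ?Dp) (at (y + t *\<^sub>R v))" using assms frechet_derivative_works by blast
  have lin: "linear ?Dp" using has_derivative_linear[OF dp] .
  have h1: "((\<lambda>s. y + s *\<^sub>R v) has_derivative (\<lambda>s. s *\<^sub>R v)) (at t)"
    by (auto intro!: derivative_eq_intros)
  have "((\<lambda>s. \<psi> (y + s *\<^sub>R v)) has_derivative (\<lambda>s. ?Dp (s *\<^sub>R v))) (at t)"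
    using diff_chain_at[OF h1 dp] by (simp add: o_def)
  moreover have "(\<lambda>s. ?Dp (s *\<^sub>R v)) = (*) (\<Sum>j\<in>UNIV. v $ j * partial_deriv \<psi> j (y + t *\<^sub>R v))"
  proof
    fix s
    have "?Dp (s *\<^sub>R v) = s * ?Dp v" using linear_scale[OF lin] by simp
    also have "?Dp v = (\<Sum>j\<in>UNIV. v $ j * ?Dp (axis j 1))" by (rule linear_expand[OF lin])
    finally show "?Dp (s *\<^sub>R v) = (\<Sum>j\<in>UNIV. v $ j * partial_deriv \<psi> j (y + t *\<^sub>R v)) * s"
      by (simp add: partial_deriv_def mult.commute)
  qed
  ultimately show ?thesis unfolding has_field_derivative_def by simp
qed

lemma seg_in_orthant:
  assumes "y \<in> pos_orthant" "z \<in> pos_orthant" "0 \<le> t" "t \<le> 1"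
  shows "y + t *\<^sub>R (z - y) \<in> pos_orthant"
proof -
  have "y + t *\<^sub>R (z - y) = (1 - t) *\<^sub>R y + t *\<^sub>R z" by (simp add: algebra_simps)
  then show ?thesis using convex_pos_orthant assms unfolding convex_def
    by (metis diff_add_cancel diff_ge_0_iff_ge)
qed

lemma mono_orthant:
  fixes \<psi> :: "real^'k \<Rightarrow> real"
  assumes d: "\<And>x. x \<in> pos_orthant \<Longrightarrow> \<psi> differentiable (at x)"
    and p: "\<And>x j. x \<in> pos_orthant \<Longrightarrow> partial_deriv \<psi> j x > 0"
    and yz: "y \<in> pos_orthant" "z \<in> pos_orthant"
  shows "(\<forall>j. y $ j \<le> z $ j) \<Longrightarrow> \<psi> y \<le> \<psi> z"
    and "(\<forall>j. y $ j < z $ j) \<Longrightarrow> \<psi> y < \<psi> z"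
proof -
  let ?f = "\<lambda>s. \<psi> (y + s *\<^sub>R (z - y))"
  have der: "DERIV ?f t :> (\<Sum>j\<in>UNIV. (z - y) $ j * partial_deriv \<psi> j (y + t *\<^sub>R (z - y)))"
    if "0 \<le> t" "t \<le> 1" for t
    using seg_deriv d seg_in_orthant[OF yz that] by blast
  have e0: "?f 0 = \<psi> y" and e1: "?f 1 = \<psi> z" by simp_all
  show "\<psi> y \<le> \<psi> z" if le: "\<forall>j. y $ j \<le> z $ j"
  proof -
    have "?f 0 \<le> ?f 1"
    proof (rule DERIV_nonneg_imp_nondecreasing[of 0 1])
      fix t :: real assume t: "0 \<le> t" "t \<le> 1"
      have "0 \<le> (\<Sum>j\<in>UNIV. (z - y) $ j * partial_deriv \<psi> j (y + t *\<^sub>R (z - y)))"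
        using le p[OF seg_in_orthant[OF yz t]] by (intro sum_nonneg mult_nonneg_nonneg) (auto simp: less_imp_le)
      then show "\<exists>y. DERIV ?f t :> y \<and> 0 \<le> y" using der[OF t] by blast
    qed simp
    then show ?thesis by simp
  qed
  show "\<psi> y < \<psi> z" if lt: "\<forall>j. y $ j < z $ j"
  proof -
    have "?f 0 < ?f 1"
    proof (rule DERIV_pos_imp_increasing[of 0 1])
      fix t :: real assume t: "0 \<le> t" "t \<le> 1"
      have "0 < (\<Sum>j\<in>UNIV. (z - y) $ j * partial_deriv \<psi> j (y + t *\<^sub>R (z - y)))"
        using lt p[OF seg_in_orthant[OF yz t]] by (intro sum_pos mult_pos_pos) auto
      then show "\<exists>y. DERIV ?f t :> y \<and> 0 < y" using der[OF t] by blast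
    qed simp
    then show ?thesis by simp
  qed
qed

lemma class_C_D:
  assumes "class_C g"
  shows "\<And>x. x \<in> pos_orthant \<Longrightarrow> g differentiable (at x)"
    and "\<And>x j. x \<in> pos_orthant \<Longrightarrow> partial_deriv g j x > 0"
    and "\<And>c x. c > 0 \<Longrightarrow> x \<in> pos_orthant \<Longrightarrow> g (c *\<^sub>R x) = c * g x"
    and "\<And>x. x \<in> pos_orthant \<Longrightarrow> g x > 0"
    and "\<And>y z. y \<in> pos_orthant \<Longrightarrow> z \<in> pos_orthant \<Longrightarrow> (\<forall>j. y $ j \<le> z $ j) \<Longrightarrow> g y \<le> g z"
proof -
  have s: "ck_on (Suc 0) pos_orthant g" using assms unfolding class_C_def smooth_on_def by blast
  show d: "\<And>x. x \<in> pos_orthant \<Longrightarrow> g differentiable (at x)" using s by simp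
  show p: "\<And>x j. x \<in> pos_orthant \<Longrightarrow> partial_deriv g j x > 0" using assms unfolding class_C_def by blast
  show h: "\<And>c x. c > 0 \<Longrightarrow> x \<in> pos_orthant \<Longrightarrow> g (c *\<^sub>R x) = c * g x" using assms unfolding class_C_def by blast
  show "\<And>y z. y \<in> pos_orthant \<Longrightarrow> z \<in> pos_orthant \<Longrightarrow> (\<forall>j. y $ j \<le> z $ j) \<Longrightarrow> g y \<le> g z"
    using mono_orthant(1)[OF d p] by blast
  show "g x > 0" if x: "x \<in> pos_orthant" for x
  proof -
    have x2: "(2::real) *\<^sub>R x \<in> pos_orthant" using x by (auto simp: pos_orthant_def)
    have "g x < g ((2::real) *\<^sub>R x)"
      using mono_orthant(2)[OF d p x x2] x by (auto simp: pos_orthant_def)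
    then show ?thesis using h[of 2 x] x by simp
  qed
qed



lemma inv_in_orthant: "x \<in> pos_orthant \<Longrightarrow> (\<chi> i. inverse (x $ i)) \<in> pos_orthant"
  by (simp add: pos_orthant_def)

lemma scale_in_orthant: "c > 0 \<Longrightarrow> x \<in> pos_orthant \<Longrightarrow> c *\<^sub>R x \<in> pos_orthant"
  by (simp add: pos_orthant_def)

lemma inv_concave:
  fixes g :: "real^'n \<Rightarrow> real"
  assumes homog: "\<And>c x. c > 0 \<Longrightarrow> x \<in> pos_orthant \<Longrightarrow> g (c *\<^sub>R x) = c * g x"
    and pos: "\<And>x. x \<in> pos_orthant \<Longrightarrow> g x > 0"
    and conc: "concave_on pos_orthant (\<lambda>x. - g (\<chi> i. inverse (x $ i)))"
  shows "concave_on pos_orthant (\<lambda>x. inverse (g (\<chi> i. inverse (x $ i))))"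
proof -
  define iv :: "real^'n \<Rightarrow> real^'n" where "iv x = (\<chi> i. inverse (x $ i))" for x
  define k where "k x = inverse (g (iv x))" for x
  have ivP: "x \<in> pos_orthant \<Longrightarrow> iv x \<in> pos_orthant" for x unfolding iv_def by (rule inv_in_orthant)
  have ivs: "iv (c *\<^sub>R x) = inverse c *\<^sub>R iv x" for c x
    unfolding iv_def by (simp add: vec_eq_iff)
  have kpos: "x \<in> pos_orthant \<Longrightarrow> k x > 0" for x unfolding k_def using pos ivP by simp
  have khom: "k (c *\<^sub>R x) = c * k x" if "c > 0" "x \<in> pos_orthant" for c x
    unfolding k_def ivs using homog[of "inverse c" "iv x"] that ivP by simp
  have conc': "concave_on pos_orthant (\<lambda>x. - inverse (k x))"
    using conc unfolding k_def iv_def by simp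
  have "convex (pos_orthant :: (real^'n) set)" by (rule convex_pos_orthant)
  moreover have "k (u *\<^sub>R x + v *\<^sub>R y) \<ge> u * k x + v * k y"
    if x: "x \<in> pos_orthant" and y: "y \<in> pos_orthant" and u: "u \<ge> 0" and v: "v \<ge> 0" and uv: "u + v = 1"
    for x y u v
  proof -
    define a where "a = k x"
    define b where "b = k y"
    have a: "a > 0" and b: "b > 0" using kpos x y by (auto simp: a_def b_def)
    define s where "s = u * a + v * b"
    have s: "s > 0" unfolding s_def using a b u v uv
      by (metis add_cancel_right_left add_pos_nonneg add_nonneg_pos mult_nonneg_nonneg mult_pos_pos less_eq_real_def zero_less_one)
    define l where "l = u * a / s"
    define m where "m = v * b / s"
    have l: "l \<ge> 0" and m: "m \<ge> 0" using u v a b s by (auto simp: l_def m_def)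
    have lm: "l + m = 1" using s by (simp add: l_def m_def s_def add_divide_distrib[symmetric])
    define x' where "x' = inverse a *\<^sub>R x"
    define y' where "y' = inverse b *\<^sub>R y"
    have x': "x' \<in> pos_orthant" unfolding x'_def by (rule scale_in_orthant) (use a x in auto)
    have y': "y' \<in> pos_orthant" unfolding y'_def by (rule scale_in_orthant) (use b y in auto)
    have kx': "k x' = 1" using khom[of "inverse a" x] a x by (simp add: x'_def a_def)
    have ky': "k y' = 1" using khom[of "inverse b" y] b y by (simp add: y'_def b_def)
    define z where "z = l *\<^sub>R x' + m *\<^sub>R y'"
    have zP: "z \<in> pos_orthant" using convex_pos_orthant x' y' l m lm unfolding convex_def z_def by blast
    have "- inverse (k z) \<ge> l * (- inverse (k x')) + m * (- inverse (k y'))"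
      using concave_onD[OF conc', of "m" x' y'] l m lm x' y' unfolding z_def
      by (metis add_diff_cancel_right' le_add_same_cancel2)
    then have "- inverse (k z) \<ge> -1" using kx' ky' lm by (simp add: algebra_simps)
    then have "inverse (k z) \<le> 1" by simp
    then have kz: "k z \<ge> 1" using kpos[OF zP]
      by (metis inverse_inverse_eq inverse_le_1_iff not_le)
    have "u *\<^sub>R x + v *\<^sub>R y = s *\<^sub>R z"
      using a b s by (simp add: z_def x'_def y'_def l_def m_def scaleR_add_right field_simps)
    then have "k (u *\<^sub>R x + v *\<^sub>R y) = s * k z" using khom[OF s zP] by simp
    also have "\<dots> \<ge> s" using kz s by simp
    finally show ?thesis by (simp add: s_def a_def b_def)
  qed
  ultimately have "concave_on pos_orthant k" unfolding concave_on_iff by blast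
  then show ?thesis unfolding k_def iv_def by simp
qed

lemma concave_comp:
  fixes \<psi> :: "real^'k \<Rightarrow> real" and H :: "'k \<Rightarrow> real^'n \<Rightarrow> real"
  assumes conc: "concave_on pos_orthant \<psi>"
    and mono: "\<And>y z. y \<in> pos_orthant \<Longrightarrow> z \<in> pos_orthant \<Longrightarrow> (\<forall>j. y $ j \<le> z $ j) \<Longrightarrow> \<psi> y \<le> \<psi> z"
    and Hc: "\<And>j. concave_on pos_orthant (H j)"
    and Hp: "\<And>j x. x \<in> pos_orthant \<Longrightarrow> H j x > 0"
  shows "concave_on pos_orthant (\<lambda>x. \<psi> (\<chi> j. H j x))"
proof -
  have HP: "x \<in> pos_orthant \<Longrightarrow> (\<chi> j. H j x) \<in> pos_orthant" for x using Hp by (simp add: pos_orthant_def)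
  have "\<psi> (\<chi> j. H j (u *\<^sub>R x + v *\<^sub>R y)) \<ge> u * \<psi> (\<chi> j. H j x) + v * \<psi> (\<chi> j. H j y)"
    if x: "x \<in> pos_orthant" and y: "y \<in> pos_orthant" and u: "u \<ge> 0" and v: "v \<ge> 0" and uv: "u + v = 1"
    for x y u v
  proof -
    define w where "w = u *\<^sub>R (\<chi> j. H j x) + v *\<^sub>R (\<chi> j. H j y)"
    have wP: "w \<in> pos_orthant" using convex_pos_orthant HP[OF x] HP[OF y] u v uv
      unfolding convex_def w_def by blast
    have xyP: "u *\<^sub>R x + v *\<^sub>R y \<in> pos_orthant" using convex_pos_orthant x y u v uv
      unfolding convex_def by blast
    have "\<forall>j. w $ j \<le> (\<chi> j. H j (u *\<^sub>R x + v *\<^sub>R y)) $ j"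
    proof
      fix j
      have "H j (u *\<^sub>R x + v *\<^sub>R y) \<ge> u * H j x + v * H j y"
        using Hc[of j] x y u v uv unfolding concave_on_iff by blast
      then show "w $ j \<le> (\<chi> j. H j (u *\<^sub>R x + v *\<^sub>R y)) $ j" by (simp add: w_def)
    qed
    then have "\<psi> w \<le> \<psi> (\<chi> j. H j (u *\<^sub>R x + v *\<^sub>R y))" using mono wP HP[OF xyP] by blast
    moreover have "\<psi> w \<ge> u * \<psi> (\<chi> j. H j x) + v * \<psi> (\<chi> j. H j y)"
      using conc HP[OF x] HP[OF y] u v uv unfolding concave_on_iff w_def by blast
    ultimately show ?thesis by linarith
  qed
  then show ?thesis unfolding concave_on_iff using convex_pos_orthant by blast
qed



theorem theorem2p7:
  fixes fs :: "'k::finite \<Rightarrow> (real ^ 'n \<Rightarrow> real)"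
    and \<phi> :: "real ^ 'k \<Rightarrow> real"
  assumes "\<And>j. class_C (fs j)"
    and "class_C \<phi>"
  shows "class_C (\<lambda>x. \<phi> (\<chi> j. fs j x))
         \<and> ((\<forall>j. class_S (fs j)) \<longrightarrow> class_S (\<lambda>x. \<phi> (\<chi> j. fs j x)))"
proof -
  note fC = class_C_D[OF assms(1)]
  note pC = class_C_D[OF assms(2)]
  have FP: "x \<in> pos_orthant \<Longrightarrow> (\<chi> j. fs j x) \<in> pos_orthant" for x
    using fC(4) by (simp add: pos_orthant_def)
  have smooth: "smooth_on pos_orthant (\<lambda>x. \<phi> (\<chi> j. fs j x))"
    unfolding smooth_on_def
  proof
    fix m
    have "ck_on m pos_orthant \<phi>" using assms(2) unfolding class_C_def smooth_on_def by blast
    moreover have "\<And>j. ck_on m pos_orthant (fs j)" using assms(1) unfolding class_C_def smooth_on_def by blast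
    ultimately show "ck_on m pos_orthant (\<lambda>x. \<phi> (\<chi> j. fs j x))"
      using ck_on_compose[where fs=fs and S=pos_orthant and U=pos_orthant, OF open_pos_orthant open_pos_orthant FP] by blast
  qed
  have homog: "\<forall>c>0. \<forall>x::real^'n\<in>pos_orthant. \<phi> (\<chi> j. fs j (c *\<^sub>R x)) = c * \<phi> (\<chi> j. fs j x)"
  proof (intro allI impI ballI)
    fix c :: real and x :: "real^'n" assume c: "c > 0" and x: "x \<in> pos_orthant"
    have "(\<chi> j. fs j (c *\<^sub>R x)) = c *\<^sub>R (\<chi> j. fs j x)" using fC(3)[OF c x] by (simp add: vec_eq_iff)
    then show "\<phi> (\<chi> j. fs j (c *\<^sub>R x)) = c * \<phi> (\<chi> j. fs j x)" using pC(3)[OF c FP[OF x]] by simp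
  qed
  have part: "\<forall>x\<in>pos_orthant. \<forall>i. partial_deriv (\<lambda>x. \<phi> (\<chi> j. fs j x)) i x > 0"
  proof (intro allI ballI)
    fix x :: "real^'n" and i assume x: "x \<in> pos_orthant"
    have "partial_deriv (\<lambda>x. \<phi> (\<chi> j. fs j x)) i x =
         (\<Sum>j\<in>UNIV. partial_deriv \<phi> j (\<chi> j. fs j x) * partial_deriv (fs j) i x)"
      using pC(1)[OF FP[OF x]] fC(1)[OF x] by (rule chain_partial(2))
    also have "\<dots> > 0" using pC(2)[OF FP[OF x]] fC(2)[OF x] by (intro sum_pos mult_pos_pos) auto
    finally show "partial_deriv (\<lambda>x. \<phi> (\<chi> j. fs j x)) i x > 0" .
  qed
  have conc: "concave_on pos_orthant (\<lambda>x. \<phi> (\<chi> j. fs j x))"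
    using assms unfolding class_C_def by (intro concave_comp[where H = fs] pC(5) fC(4)) auto
  have iconc: "concave_on pos_orthant (\<lambda>x. - \<phi> (\<chi> j. fs j (\<chi> i. inverse (x $ i))))"
  proof -
    have "concave_on pos_orthant (\<lambda>x. (\<lambda>y. - \<phi> (\<chi> j. inverse (y $ j)))
            (\<chi> j. (\<lambda>j x. inverse (fs j (\<chi> i. inverse (x $ i)))) j x))"
    proof (rule concave_comp[where \<psi>="\<lambda>y. - \<phi> (\<chi> j. inverse (y $ j))" and H="\<lambda>j x. inverse (fs j (\<chi> i. inverse (x $ i)))"])
      show "concave_on pos_orthant (\<lambda>y. - \<phi> (\<chi> j. inverse (y $ j)))"
        using assms(2) unfolding class_C_def by blast
      show "- \<phi> (\<chi> j. inverse (y $ j)) \<le> - \<phi> (\<chi> j. inverse (z $ j))"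
        if "y \<in> pos_orthant" "z \<in> pos_orthant" "\<forall>j. y $ j \<le> z $ j" for y z
      proof -
        have "\<phi> (\<chi> j. inverse (z $ j)) \<le> \<phi> (\<chi> j. inverse (y $ j))"
          using that by (intro pC(5) inv_in_orthant) (auto simp: pos_orthant_def le_imp_inverse_le)
        then show ?thesis by simp
      qed
      show "concave_on pos_orthant (\<lambda>x. inverse (fs j (\<chi> i. inverse (x $ i))))" for j
        using assms(1)[of j] fC(3,4) unfolding class_C_def by (intro inv_concave) auto
      show "0 < inverse (fs j (\<chi> i. inverse (x $ i)))" if "x \<in> pos_orthant" for j x
        using fC(4)[OF inv_in_orthant[OF that]] by simp
    qed
    then show ?thesis by simp
  qed
  have CC: "class_C (\<lambda>x. \<phi> (\<chi> j. fs j x))"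
    unfolding class_C_def using smooth homog part conc iconc by simp
  have "class_S (\<lambda>x. \<phi> (\<chi> j. fs j x))" if S: "\<forall>j. class_S (fs j)"
  proof -
    have "\<phi> (\<chi> j. fs j (\<chi> i. x $ p i)) = \<phi> (\<chi> j. fs j x)"
      if "p permutes (UNIV :: 'n set)" "x \<in> pos_orthant" for p x
      using S that unfolding class_S_def by simp
    then show ?thesis unfolding class_S_def using CC by blast
  qed
  then show ?thesis using CC by blast
qed

end
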